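(* Let $X,X'$ and $Y$ be nonempty sets and let $F\colon X^*\to Y$ be a standard and preassociative function. Let $g\colon X'\to X$ be any function and let $\mathbf{a}\in Y\setminus\mathrm{ran}(F^{\flat})$. Define $H\colon X'^*\to Y$ by $H(\varepsilon)=\mathbf{a}$ and $H_n(x_1,\ldots,x_n)=F_n(g(x_1),\ldots,g(x_n))$ for every integer $n\geqslant 1$. Then $H$ is standard and preassociative.
   Context: For a nonempty set $Z$, $Z^*=\bigcup_{n\geqslant 0}Z^n$ is the set of all finite tuples over $Z$, with $Z^0=\{\varepsilon\}$, $\varepsilon$ the empty tuple. For tuples $\mathbf{x},\mathbf{y}$, $F(\mathbf{x},\mathbf{y})$ denotes $F$ applied to the concatenation of $\mathbf{x}$ and $\mathbf{y}$ (and similarly for more tuples); concatenation with $\varepsilon$ leaves a tuple unchanged. For $F\colon Z^*\to Y$, $F_n=F|_{Z^n}$ and $F^{\flat}=F|_{Z^*\setminus\{\varepsilon\}}$. $F$ is standard if $F(\mathbf{x})=F(\varepsilon)$ holds only if $\mathbf{x}=\varepsilon$. $F$ is preassociative if for all $\mathbf{x},\mathbf{y},\mathbf{y}',\mathbf{z}\in Z^*$, $F(\mathbf{y})=F(\mathbf{y}')$ implies $F(\mathbf{x},\mathbf{y},\mathbf{z})=F(\mathbf{x},\mathbf{y}',\mathbf{z})$. *)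

theory Defs
  imports Main
begin

text \<open>Tuples over a set Z are modelled as lists whose elements lie in Z (lists Z);
  the empty tuple is the empty list, concatenation is append.\<close>

definition standard_on :: "'a set \<Rightarrow> ('a list \<Rightarrow> 'b) \<Rightarrow> bool" where
  "standard_on Z F \<longleftrightarrow> (\<forall>xs \<in> lists Z. F xs = F [] \<longrightarrow> xs = [])"

definition preassociative_on :: "'a set \<Rightarrow> ('a list \<Rightarrow> 'b) \<Rightarrow> bool" where
  "preassociative_on Z F \<longleftrightarrow>
     (\<forall>x \<in> lists Z. \<forall>y \<in> lists Z. \<forall>y' \<in> lists Z. \<forall>z \<in> lists Z.
        F y = F y' \<longrightarrow> F (x @ y @ z) = F (x @ y' @ z))"

end

theory Submission
  imports Defs
begin

theorem proposition3p4:
  fixes X :: "'a set" and X' :: "'c set" and Y :: "'b set"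
    and F :: "'a list \<Rightarrow> 'b" and g :: "'c \<Rightarrow> 'a" and a :: 'b
    and H :: "'c list \<Rightarrow> 'b"
  assumes "X \<noteq> {}" and "X' \<noteq> {}" and "Y \<noteq> {}"
    and "\<forall>xs \<in> lists X. F xs \<in> Y"
    and "standard_on X F" and "preassociative_on X F"
    and "\<forall>x \<in> X'. g x \<in> X"
    and "a \<in> Y" and "a \<notin> F ` (lists X - {[]})"
    and "H [] = a"
    and "\<forall>xs \<in> lists X'. xs \<noteq> [] \<longrightarrow> H xs = F (map g xs)"
  shows "standard_on X' H \<and> preassociative_on X' H"
proof -
  have mg: "map g xs \<in> lists X" if "xs \<in> lists X'" for xs
    using that assms(7) by auto
  have ne: "H xs \<noteq> a" if "xs \<in> lists X'" "xs \<noteq> []" for xs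
  proof
    assume "H xs = a"
    hence "F (map g xs) = a" using assms(11) that by auto
    moreover have "map g xs \<in> lists X - {[]}" using mg[OF that(1)] that(2) by auto
    ultimately show False using assms(9) by (metis image_eqI)
  qed
  have std: "standard_on X' H"
    unfolding standard_on_def using ne assms(10) by auto
  have pa: "preassociative_on X' H"
    unfolding preassociative_on_def
  proof (intro ballI impI)
    fix x y y' z assume xs: "x \<in> lists X'" "y \<in> lists X'" "y' \<in> lists X'" "z \<in> lists X'"
      and eq: "H y = H y'"
    show "H (x @ y @ z) = H (x @ y' @ z)"
    proof (cases "y = []")
      case True
      then have "y' = []" using eq ne xs assms(10) by metis
      then show ?thesis using True by simp
    next
      case False
      then have "y' \<noteq> []" using eq ne xs assms(10) by metis
      have "F (map g y) = F (map g y')" using eq assms(11) xs False \<open>y' \<noteq> []\<close> by auto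
      hence "F (map g x @ map g y @ map g z) = F (map g x @ map g y' @ map g z)"
        using assms(6) mg xs unfolding preassociative_on_def by blast
      moreover have "x @ y @ z \<in> lists X'" "x @ y' @ z \<in> lists X'" using xs by auto
      ultimately show ?thesis using assms(11) False \<open>y' \<noteq> []\<close> by simp
    qed
  qed
  show ?thesis using std pa by simp
qed

end
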